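(* Let $h$ and $k$ be relatively prime odd integers with $k>0$. Then $$B_{1}(h,k)=-10h\,s(h,k)+4h\,s(2h,k)+4h\,s(h,2k)+\frac{1}{2k}-\frac{1}{2}.$$
   Context: $[x]$ denotes the greatest integer $\le x$, and $((x))=x-[x]-\tfrac12$ if $x\notin\mathbb{Z}$, $((x))=0$ if $x\in\mathbb{Z}$. For integers $a,b$ with $b>0$: the Dedekind sum is $s(a,b)=\sum_{j=1}^{b-1}\left(\left(\frac{aj}{b}\right)\right)\left(\left(\frac{j}{b}\right)\right)$, and (for $\gcd(a,b)=1$) $$B_{1}(a,b)=\sum_{j=1}^{b-1}(-1)^{j+\left[\frac{aj}{b}\right]}\left[\frac{aj}{b}\right].$$ *)

theory Defs
  imports Complex_Main
begin

definition sawtooth :: "real \<Rightarrow> real" where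
  "sawtooth x = (if x \<in> \<int> then 0 else x - of_int \<lfloor>x\<rfloor> - 1/2)"

definition dedekind_sum :: "int \<Rightarrow> int \<Rightarrow> real" where
  "dedekind_sum a b = (\<Sum>j\<in>{1..b-1}. sawtooth (of_int (a*j) / of_int b) * sawtooth (of_int j / of_int b))"

definition B1 :: "int \<Rightarrow> int \<Rightarrow> int" where
  "B1 a b = (\<Sum>j\<in>{1..b-1}. (-1) ^ nat \<bar>j + (a*j) div b\<bar> * ((a*j) div b))"

end

theory Submission
  imports Defs
begin
lemma saw_shift: "sawtooth (x + of_int n) = sawtooth x"
proof -
  have "x + of_int n \<in> \<int> \<longleftrightarrow> x \<in> \<int>"
  proof
    assume "x + of_int n \<in> \<int>"
    then have "x + of_int n - of_int n \<in> \<int>" by (intro Ints_diff) auto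
    then show "x \<in> \<int>" by simp
  qed auto
  moreover have "\<lfloor>x + of_int n\<rfloor> = \<lfloor>x\<rfloor> + n" by simp
  ultimately show ?thesis by (simp add: sawtooth_def)
qed

lemma saw_neg: "sawtooth (- x) = - sawtooth x"
proof (cases "x \<in> \<int>")
  case True then show ?thesis by (simp add: sawtooth_def)
next
  case False
  then have n: "- x \<notin> \<int>" using Ints_minus[of "-x"] by auto
  have "x \<noteq> of_int \<lfloor>x\<rfloor>"
  proof
    assume "x = of_int \<lfloor>x\<rfloor>"
    then show False using False by (metis Ints_of_int)
  qed
  then have "\<lfloor>-x\<rfloor> = - \<lfloor>x\<rfloor> - 1" by (simp add: floor_minus ceiling_altdef)
  then show ?thesis using False n by (simp add: sawtooth_def)
qed

lemma saw_refl: "sawtooth (of_int n - x) = - sawtooth x"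
  using saw_shift[of "-x" n] saw_neg[of x] by simp

lemma saw_frac:
  fixes a b :: int
  assumes "b > 0" "a mod b \<noteq> 0"
  shows "sawtooth (of_int a / of_int b) = of_int (a mod b) / of_int b - 1/2"
proof -
  have ni: "of_int a / of_int b \<notin> (\<int> :: real set)"
  proof
    assume "of_int a / of_int b \<in> (\<int> :: real set)"
    then obtain n where "of_int a / of_int b = (of_int n :: real)" by (auto elim: Ints_cases)
    then have "(of_int a :: real) = of_int (n * b)" using assms(1) by (simp add: field_simps)
    then have "a = n * b" by linarith
    then show False using assms(2) by simp
  qed
  have "a = b * (a div b) + a mod b" by simp
  then have "(of_int a :: real) = of_int b * of_int (a div b) + of_int (a mod b)"
    by (metis of_int_add of_int_mult)
  then have "of_int a / of_int b - of_int (a div b) = (of_int (a mod b) :: real) / of_int b"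
    using assms(1) by (simp add: field_simps)
  then show ?thesis using ni by (simp add: sawtooth_def floor_divide_of_int_eq)
qed

lemma sum_perm:
  assumes "finite A" "\<sigma> ` A \<subseteq> A" "inj_on \<sigma> A"
  shows "(\<Sum>j\<in>A. F (\<sigma> j)) = sum F A"
proof -
  have "\<sigma> ` A = A" using endo_inj_surj assms by blast
  then have "sum F A = sum F (\<sigma> ` A)" by simp
  also have "\<dots> = (\<Sum>j\<in>A. F (\<sigma> j))" using sum.reindex[OF assms(3)] by simp
  finally show ?thesis by simp
qed

lemma divmod_eq:
  fixes a b Q R :: int
  assumes "a = b * Q + R" "0 \<le> R" "R < b"
  shows "a div b = Q" "a mod b = R"
  using assms by (simp_all add: div_pos_pos_trivial mod_pos_pos_trivial)


lemma sum_int_range: "(\<Sum>j\<in>{1..int n}. real_of_int j) = real n * (real n + 1) / 2"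
proof (induction n)
  case 0 then show ?case by simp
next
  case (Suc n)
  have "{1..int (Suc n)} = insert (int n + 1) {1..int n}" by auto
  then show ?case using Suc by (simp add: field_simps)
qed

lemma neg1_pow: "(-1::int) ^ nat \<bar>n\<bar> = (if even n then 1 else -1)"
proof -
  have "even (nat \<bar>n\<bar>) \<longleftrightarrow> even n" by (simp add: even_nat_iff)
  then show ?thesis by (simp add: minus_one_power_iff)
qed

lemma pointwise_rhs2:
  fixes H x u E P Q :: real
  assumes "Q = H*x - u"
  shows "-10*H*((u - 1/2)*(x - 1/2)) + 4*H*((2*u - E - 1/2)*(x - 1/2)) + 8*H*((u/2 + P/2 - 1/2)*(x/2 - 1/2))
     = (Q + u)*(1 - 4*E + 2*P) + H*(-u + 2*E - 2*P + 1/2)"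
  unfolding assms by (simp add: algebra_simps)

lemma pointwise_final:
  fixes H Q U E P F \<rho> :: real
  assumes "E = 0 \<or> E = 1"
  shows "((Q + U) * (1 - 4*E + 2*P) + H * (- U + 2*E - 2*P + 1/2)) - Q * (1 - 2*\<rho>)
   = (2*Q*P - (H-1)*P) + (2*U*P - P) - (Q*(1-2*\<rho>) - (2*Q - H*F + E)*(1-2*E))
     - H * (P - (F + E - 2*F*E)) - (2*Q - H + 1)/2 - H * (2*U - 1)/2 - (H+1)*(F - E)
     + (H+1)/2 * (2*F - 1) + U*(1 - 4*E) + 1"
  using assms by (elim disjE) (simp_all add: field_simps)

lemma perm_zero:
  assumes "finite A" "\<sigma> ` A \<subseteq> A" "inj_on \<sigma> A" "\<And>j. j \<in> A \<Longrightarrow> G j = F j - F (\<sigma> j)"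
  shows "sum G A = (0::real)"
proof -
  have "sum G A = (\<Sum>j\<in>A. F j - F (\<sigma> j))" using assms(4) by (rule sum.cong[OF refl])
  also have "\<dots> = sum F A - (\<Sum>j\<in>A. F (\<sigma> j))" by (simp add: sum_subtractf)
  also have "\<dots> = 0" using sum_perm[OF assms(1-3), of F] by simp
  finally show ?thesis .
qed

lemma parA: fixes x m e :: int assumes "e = 0 \<or> e = 1" shows "(2*x - (2*m+1)*e) mod 2 = e"
proof -
  define t where "t = x - m*e - e"
  have eq: "(2*x - (2*m+1)*e) = e + 2*t" by (simp add: t_def algebra_simps)
  have "(2*x - (2*m+1)*e) mod 2 = (e + 2*t) mod 2" using eq by (rule arg_cong)
  also have "\<dots> = e mod 2" by presburger
  also have "\<dots> = e" using assms by auto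
  finally show ?thesis .
qed

lemma parB: fixes q a f e :: int assumes "f = 0 \<or> f = 1" "e = 0 \<or> e = 1"
  shows "(2*q - (2*a+1)*f + e) mod 2 = f + e - 2*f*e"
proof -
  define t where "t = q - a*f - f + f*e"
  define u where "u = f + e - 2*f*e"
  have eq: "2*q - (2*a+1)*f + e = u + 2*t" by (simp add: t_def u_def algebra_simps)
  have "(2*q - (2*a+1)*f + e) mod 2 = (u + 2*t) mod 2" using eq by (rule arg_cong)
  also have "\<dots> = u mod 2" by presburger
  also have "\<dots> = f + e - 2*f*e" using assms by (auto simp: u_def)
  finally show ?thesis .
qed

lemma parC: fixes i j m fi fj :: int assumes "fi = 0 \<or> fi = 1" "fj = 0 \<or> fj = 1"
  and "2*i - (2*m+1)*fi = 2*j - (2*m+1)*fj" shows "i = j"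
proof -
  have eq: "2*(i - j) = (2*m+1)*(fi - fj)" using assms(3) by (simp add: algebra_simps)
  have "fi - fj = 0 \<or> fi - fj = 1 \<or> fi - fj = -1" using assms(1,2) by auto
  moreover have "fi - fj \<noteq> 1"
  proof
    assume a: "fi - fj = 1"
    have "2*(i-j) = (2*m+1)*1" using eq a by metis
    then have "2*(i-j) = 2*m+1" by simp
    then show False by presburger
  qed
  moreover have "fi - fj \<noteq> -1"
  proof
    assume a: "fi - fj = -1"
    have "2*(i-j) = (2*m+1)*(-1)" using eq a by metis
    then have "2*(i-j) = -(2*m+1)" by simp
    then show False by presburger
  qed
  ultimately have "fi - fj = 0" by blast
  then show ?thesis using eq by simp
qed

lemma final_arith:
  fixes M K :: real
  assumes "K = 2*M+1" "K > 0"
  shows "-(4*M^2+M)/K + 2*M + 1/(2*K) - 1/2 = 0"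
proof -
  have "-(4*M^2+M)/K + 2*M + 1/(2*K) - 1/2 = (-2*(4*M^2+M) + 4*M*K + 1 - K)/(2*K)"
    using assms(2) by (simp add: field_simps)
  also have "\<dots> = 0" using assms(1) by (simp add: power2_eq_square algebra_simps)
  finally show ?thesis .
qed

lemma main_identity:
  fixes h k :: int
  assumes oh: "odd h" and ok: "odd k" and kp: "k > 0" and cop: "coprime h k"
  shows "real_of_int (B1 h k) =
           - 10 * of_int h * dedekind_sum h k + 4 * of_int h * dedekind_sum (2*h) k
           + 4 * of_int h * dedekind_sum h (2*k) + 1 / (2 * of_int k) - 1/2"
proof -
  define A where "A = {1..k-1}"
  define q where "q = (\<lambda>j. h*j div k)"
  define r where "r = (\<lambda>j. h*j mod k)"
  define e where "e = (\<lambda>j. if 2 * r j > k then 1 else (0::int))"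
  define f where "f = (\<lambda>j::int. if 2*j > k then 1 else (0::int))"
  define p where "p = (\<lambda>j. q j mod 2)"
  define \<rho> where "\<rho> = (\<lambda>j. r j mod 2)"
  define d where "d = (\<lambda>j. 2*j mod k)"
  obtain m where km: "k = 2*m+1" using ok by (elim oddE) simp
  obtain a where ha: "h = 2*a+1" using oh by (elim oddE) simp
  have m0: "m \<ge> 0" using kp km by simp
  have finA: "finite A" by (simp add: A_def)
  have hj: "h*j = k * q j + r j" for j by (simp add: q_def r_def)
  have rnz: "r j \<noteq> 0" if "j \<in> A" for j
  proof
    assume "r j = 0"
    then have "k dvd h*j" by (simp add: r_def dvd_eq_mod_eq_0)
    then have "k dvd j" using coprime_dvd_mult_right_iff[of k h j] cop by (simp add: coprime_commute)
    then show False using that by (auto simp: A_def zdvd_not_zless)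
  qed
  have rb: "1 \<le> r j \<and> r j \<le> k - 1" if "j \<in> A" for j
  proof -
    have "0 \<le> r j" "r j < k" using kp by (simp_all add: r_def)
    then show ?thesis using rnz[OF that] by linarith
  qed
  have r2: "2 * r j \<noteq> k" for j using km by presburger
  have j2: "2 * j \<noteq> k" for j using km by presburger
  have e01: "e j = 0 \<or> e j = 1" for j by (simp add: e_def)
  have f01: "f j = 0 \<or> f j = 1" for j by (simp add: f_def)
  have p01: "p j = 0 \<or> p j = 1" for j unfolding p_def by presburger
  have \<rho>01: "\<rho> j = 0 \<or> \<rho> j = 1" for j unfolding \<rho>_def by presburger

  have reflA: "k - j \<in> A" if "j \<in> A" for j using that by (simp add: A_def)
  have reflqr: "q (k-j) = h - 1 - q j \<and> r (k-j) = k - r j" if "j \<in> A" for j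
  proof -
    have eq: "h*(k-j) = k*(h-1-q j) + (k - r j)" using hj[of j] by (simp add: algebra_simps)
    have "0 \<le> k - r j" "k - r j < k" using rb[OF that] by auto
    then show ?thesis using divmod_eq[OF eq] by (simp add: q_def r_def)
  qed
  have reflq: "q (k-j) = h - 1 - q j" if "j \<in> A" for j using reflqr[OF that] by simp
  have reflr: "r (k-j) = k - r j" if "j \<in> A" for j using reflqr[OF that] by simp
  have refle: "e (k-j) = 1 - e j" if "j \<in> A" for j using reflr[OF that] r2[of j] by (auto simp: e_def)
  have reflf: "f (k-j) = 1 - f j" for j using j2[of j] by (auto simp: f_def)
  have reflp: "p (k-j) = p j" if "j \<in> A" for j using reflq[OF that] unfolding p_def ha by presburger
  have refl_img: "(\<lambda>j. k - j) ` A \<subseteq> A" using reflA by auto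
  have refl_inj: "inj_on (\<lambda>j. k - j) A" by (auto simp: inj_on_def)

  have dj: "d j = 2*j - k * f j" if "j \<in> A" for j
  proof -
    have eq: "2*j = k * f j + (2*j - k * f j)" by simp
    have "0 \<le> 2*j - k * f j" "2*j - k * f j < k" using that j2[of j] by (auto simp: A_def f_def)
    then show ?thesis using divmod_eq[OF eq] by (simp add: d_def)
  qed
  have dA: "d j \<in> A" if "j \<in> A" for j using dj[OF that] that j2[of j] by (auto simp: A_def f_def)
  have dqr: "q (d j) = 2 * q j - h * f j + e j \<and> r (d j) = 2 * r j - k * e j" if "j \<in> A" for j
  proof -
    have "h * d j = h*(2*j - k*f j)" using dj[OF that] by simp
    also have "\<dots> = 2*(h*j) - k*(h*f j)" by (simp add: algebra_simps)
    also have "\<dots> = 2*(k * q j + r j) - k*(h*f j)" by (simp only: hj)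
    also have "\<dots> = k * (2 * q j - h * f j + e j) + (2 * r j - k * e j)" by (simp add: algebra_simps)
    finally have eq: "h * d j = k * (2 * q j - h * f j + e j) + (2 * r j - k * e j)" .
    have "0 \<le> 2 * r j - k * e j" "2 * r j - k * e j < k" using rb[OF that] r2[of j] by (auto simp: e_def)
    then show ?thesis using divmod_eq[OF eq] by (simp add: q_def r_def)
  qed
  have d\<rho>: "\<rho> (d j) = e j" if "j \<in> A" for j
    using dqr[OF that] parA[OF e01[of j], of "r j" m] km by (simp add: \<rho>_def)
  have dp: "p (d j) = f j + e j - 2 * f j * e j" if "j \<in> A" for j
    using dqr[OF that] parB[OF f01[of j] e01[of j], of "q j" a] ha by (simp add: p_def)
  have d_img: "d ` A \<subseteq> A" using dA by auto
  have d_inj: "inj_on d A"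
  proof (rule inj_onI)
    fix i j assume i: "i \<in> A" and j: "j \<in> A" and eq: "d i = d j"
    then have "2*i - k * f i = 2*j - k * f j" using dj by simp
    then show "i = j" using parC[OF f01[of i] f01[of j], of i m j] km by simp
  qed

  have r_img: "r ` A \<subseteq> A" using rb by (auto simp: A_def)
  have r_inj: "inj_on r A"
  proof (rule inj_onI)
    fix i j assume i: "i \<in> A" and j: "j \<in> A" and eq: "r i = r j"
    then have "k dvd h*i - h*j" by (simp add: r_def mod_eq_dvd_iff)
    then have "k dvd h*(i-j)" by (simp add: algebra_simps)
    then have kd: "k dvd (i-j)" using coprime_dvd_mult_right_iff[of k h "i-j"] cop by (simp add: coprime_commute)
    show "i = j"
    proof (rule ccontr)
      assume "i \<noteq> j"
      then have "\<bar>k\<bar> \<le> \<bar>i - j\<bar>" using dvd_imp_le_int kd by simp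
      then show False using i j by (auto simp: A_def)
    qed
  qed
  have dq: "q (d j) = 2 * q j - h * f j + e j" if "j \<in> A" for j using dqr[OF that] by simp
  have Kpos: "real_of_int k > 0" using kp by simp
  define u where "u = (\<lambda>j. real_of_int (r j) / real_of_int k)"
  define x where "x = (\<lambda>j::int. real_of_int j / real_of_int k)"
  have uk: "u (k-j) = 1 - u j" if "j \<in> A" for j
    using reflr[OF that] Kpos by (simp add: u_def field_simps)

  define G1 where "G1 = (\<lambda>j. 2 * real_of_int (f j) - 1)"
  define G2 where "G2 = (\<lambda>j. real_of_int (f j) - real_of_int (e j))"
  define G3 where "G3 = (\<lambda>j. 2 * real_of_int (q j) - real_of_int h + 1)"
  define G4 where "G4 = (\<lambda>j. 2 * real_of_int (q j) * real_of_int (p j) - (real_of_int h - 1) * real_of_int (p j))"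
  define G5 where "G5 = (\<lambda>j. 2 * u j * real_of_int (p j) - real_of_int (p j))"
  define G6 where "G6 = (\<lambda>j. 2 * u j - 1)"
  define G7 where "G7 = (\<lambda>j. real_of_int (q j) * (1 - 2 * real_of_int (\<rho> j))
      - (2 * real_of_int (q j) - real_of_int h * real_of_int (f j) + real_of_int (e j)) * (1 - 2 * real_of_int (e j)))"
  define G8 where "G8 = (\<lambda>j. real_of_int (p j) - (real_of_int (f j) + real_of_int (e j) - 2 * real_of_int (f j) * real_of_int (e j)))"
  define V where "V = (\<lambda>j. u j * (1 - 4 * real_of_int (e j)))"
  have S1: "sum G1 A = 0"
    by (rule perm_zero[OF finA refl_img refl_inj, where F="\<lambda>j. real_of_int (f j)"]) (simp add: G1_def reflf)
  have S2: "sum G2 A = 0"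
    by (rule perm_zero[OF finA r_img r_inj, where F="\<lambda>y. if 2*y > k then (1::real) else 0"])
       (simp add: G2_def f_def e_def)
  have S3: "sum G3 A = 0"
    by (rule perm_zero[OF finA refl_img refl_inj, where F="\<lambda>j. real_of_int (q j)"]) (simp add: G3_def reflq)
  have S4: "sum G4 A = 0"
    by (rule perm_zero[OF finA refl_img refl_inj, where F="\<lambda>j. real_of_int (q j) * real_of_int (p j)"])
       (simp add: G4_def reflq reflp algebra_simps)
  have S5: "sum G5 A = 0"
    by (rule perm_zero[OF finA refl_img refl_inj, where F="\<lambda>j. u j * real_of_int (p j)"])
       (simp add: G5_def uk reflp algebra_simps)
  have S6: "sum G6 A = 0"
    by (rule perm_zero[OF finA refl_img refl_inj, where F="\<lambda>j. u j"]) (simp add: G6_def uk)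
  have S7: "sum G7 A = 0"
    by (rule perm_zero[OF finA d_img d_inj, where F="\<lambda>j. real_of_int (q j) * (1 - 2 * real_of_int (\<rho> j))"])
       (simp add: G7_def dq d\<rho>)
  have S8: "sum G8 A = 0"
    by (rule perm_zero[OF finA d_img d_inj, where F="\<lambda>j. real_of_int (p j)"]) (simp add: G8_def dp)

  have Aeq: "A = {1..2*m}" using km by (simp add: A_def)
  have nm: "int (nat m) = m" "real (nat m) = real_of_int m" using m0 by simp_all
  have n2m: "int (nat (2*m)) = 2*m" "real (nat (2*m)) = 2 * real_of_int m" using m0 by simp_all
  have Sm: "(\<Sum>j\<in>{1..m}. real_of_int j) = real_of_int m * (real_of_int m + 1) / 2"
    using sum_int_range[of "nat m"] nm by simp
  have S2m: "(\<Sum>j\<in>{1..2*m}. real_of_int j) = 2 * real_of_int m * (2 * real_of_int m + 1) / 2"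
    using sum_int_range[of "nat (2*m)"] n2m by simp
  have spl: "{1..2*m} = {1..m} \<union> {m+1..2*m}" using m0 by auto
  have dis: "{1..m} \<inter> {m+1..2*m} = {}" by auto
  define W where "W = (\<lambda>j::int. real_of_int j * (1 - 4 * (if 2*j > k then 1 else 0)))"
  have W1: "(\<Sum>j\<in>{1..m}. W j) = (\<Sum>j\<in>{1..m}. real_of_int j)"
    by (rule sum.cong) (auto simp: W_def km)
  have W2: "(\<Sum>j\<in>{m+1..2*m}. W j) = -3 * (\<Sum>j\<in>{m+1..2*m}. real_of_int j)"
    by (simp add: sum_distrib_left, rule sum.cong) (auto simp: W_def km)
  have Sid: "(\<Sum>j\<in>{1..2*m}. real_of_int j) = (\<Sum>j\<in>{1..m}. real_of_int j) + (\<Sum>j\<in>{m+1..2*m}. real_of_int j)"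
    unfolding spl by (rule sum.union_disjoint) (use dis in auto)
  have SW: "sum W A = - (4 * real_of_int m ^ 2 + real_of_int m)"
  proof -
    have "sum W A = (\<Sum>j\<in>{1..m}. W j) + (\<Sum>j\<in>{m+1..2*m}. W j)"
      unfolding Aeq spl by (rule sum.union_disjoint) (use dis in auto)
    then have e1: "sum W A = (\<Sum>j\<in>{1..m}. real_of_int j) - 3 * (\<Sum>j\<in>{m+1..2*m}. real_of_int j)"
      using W1 W2 by simp
    have e2: "(\<Sum>j\<in>{m+1..2*m}. real_of_int j) = 2 * real_of_int m * (2 * real_of_int m + 1) / 2
       - real_of_int m * (real_of_int m + 1) / 2" using Sid Sm S2m by linarith
    show ?thesis unfolding e1 e2 Sm by (simp add: power2_eq_square field_simps)
  qed
  have SV: "sum V A = - (4 * real_of_int m ^ 2 + real_of_int m) / real_of_int k"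
  proof -
    have "sum V A = (\<Sum>j\<in>A. (\<lambda>y. real_of_int y / real_of_int k * (1 - 4 * (if 2*y > k then 1 else 0))) (r j))"
      by (rule sum.cong) (auto simp: V_def u_def e_def)
    also have "\<dots> = (\<Sum>j\<in>A. real_of_int j / real_of_int k * (1 - 4 * (if 2*j > k then 1 else 0)))"
      by (rule sum_perm[OF finA r_img r_inj])
    also have "\<dots> = sum W A / real_of_int k"
      by (simp add: W_def sum_divide_distrib)
    finally show ?thesis using SW by simp
  qed
  have Kk: "real_of_int k = 2 * real_of_int m + 1" using km by simp
  have cardA: "real (card A) = 2 * real_of_int m" using km m0 by (simp add: A_def)

  have sign: "(-1::int) ^ nat \<bar>j + q j\<bar> = 1 - 2 * \<rho> j" for j
  proof -
    define t where "t = (m+1) * q j - a * j"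
    have "(2*a+1)*j = (2*m+1) * q j + r j" using hj[of j] ha km by simp
    then have "j + q j = r j + 2 * t" unfolding t_def by algebra
    then have "even (j + q j) \<longleftrightarrow> \<rho> j = 0" unfolding \<rho>_def by presburger
    then show ?thesis using \<rho>01[of j] by (auto simp: neg1_pow)
  qed
  have LHS: "real_of_int (B1 h k) = (\<Sum>j\<in>A. real_of_int (q j) * (1 - 2 * real_of_int (\<rho> j)))"
  proof -
    have "B1 h k = (\<Sum>j\<in>A. q j * (1 - 2 * \<rho> j))"
      unfolding B1_def A_def by (rule sum.cong) (auto simp: sign[unfolded q_def] q_def)
    then show ?thesis by simp
  qed

  have xmod: "sawtooth (real_of_int j / real_of_int k) = x j - 1/2" if "j \<in> A" for j
    using saw_frac[of k j] that kp by (simp add: A_def x_def)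
  have DS1: "dedekind_sum h k = (\<Sum>j\<in>A. (u j - 1/2) * (x j - 1/2))"
    unfolding dedekind_sum_def A_def[symmetric]
  proof (rule sum.cong[OF refl])
    fix j assume j: "j \<in> A"
    have "sawtooth (real_of_int (h*j) / real_of_int k) = u j - 1/2"
      using saw_frac[of k "h*j"] rnz[OF j] kp by (simp add: r_def u_def)
    then show "sawtooth (real_of_int (h*j) / real_of_int k) * sawtooth (real_of_int j / real_of_int k)
        = (u j - 1/2) * (x j - 1/2)" using xmod[OF j] by simp
  qed
  have DS2: "dedekind_sum (2*h) k = (\<Sum>j\<in>A. (2 * u j - real_of_int (e j) - 1/2) * (x j - 1/2))"
    unfolding dedekind_sum_def A_def[symmetric]
  proof (rule sum.cong[OF refl])
    fix j assume j: "j \<in> A"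
    have eq: "2*h*j = k * (2 * q j + e j) + (2 * r j - k * e j)"
      using hj[of j] by algebra
    have b: "0 \<le> 2 * r j - k * e j" "2 * r j - k * e j < k" "2 * r j - k * e j \<noteq> 0"
      using rb[OF j] r2[of j] by (auto simp: e_def)
    have "(2*h*j) mod k = 2 * r j - k * e j" using divmod_eq(2)[OF eq b(1,2)] .
    then have "sawtooth (real_of_int (2*h*j) / real_of_int k) = real_of_int (2 * r j - k * e j) / real_of_int k - 1/2"
      using saw_frac[of k "2*h*j"] b(3) kp by simp
    also have "\<dots> = 2 * u j - real_of_int (e j) - 1/2" using Kpos by (simp add: u_def field_simps)
    finally show "sawtooth (real_of_int (2*h*j) / real_of_int k) * sawtooth (real_of_int j / real_of_int k)
        = (2 * u j - real_of_int (e j) - 1/2) * (x j - 1/2)" using xmod[OF j] by simp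
  qed
  define g where "g = (\<lambda>i. sawtooth (real_of_int (h*i) / real_of_int (2*k)) * sawtooth (real_of_int i / real_of_int (2*k)))"
  define B where "B = {k+1..2*k-1}"
  have gk: "g k = 0"
  proof -
    have "sawtooth (real_of_int k / real_of_int (2*k)) = real_of_int (k mod (2*k)) / real_of_int (2*k) - 1/2"
      using saw_frac[of "2*k" k] kp by simp
    also have "\<dots> = 0" using kp by simp
    finally show ?thesis by (simp add: g_def)
  qed
  have grefl: "g (2*k - i) = g i" for i
  proof -
    have eq1: "real_of_int (h*(2*k-i)) / real_of_int (2*k) = real_of_int h - real_of_int (h*i) / real_of_int (2*k)"
      using Kpos by (simp add: field_simps right_diff_distrib)
    have eq2: "real_of_int (2*k-i) / real_of_int (2*k) = real_of_int 1 - real_of_int i / real_of_int (2*k)"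
      using Kpos by (simp add: field_simps)
    have s1: "sawtooth (real_of_int (h*(2*k-i)) / real_of_int (2*k)) = - sawtooth (real_of_int (h*i) / real_of_int (2*k))"
      unfolding eq1 by (rule saw_refl)
    have s2: "sawtooth (real_of_int (2*k-i) / real_of_int (2*k)) = - sawtooth (real_of_int i / real_of_int (2*k))"
      unfolding eq2 by (rule saw_refl)
    show ?thesis unfolding g_def s1 s2 by simp
  qed
  have Bimg: "B = (\<lambda>i. 2*k - i) ` A"
  proof
    show "B \<subseteq> (\<lambda>i. 2*k - i) ` A"
    proof
      fix y assume "y \<in> B"
      then have "2*k - y \<in> A" "y = 2*k - (2*k - y)" by (auto simp: A_def B_def)
      then show "y \<in> (\<lambda>i. 2*k - i) ` A" by blast
    qed
  qed (auto simp: A_def B_def)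
  have SB: "sum g B = sum g A"
  proof -
    have "sum g B = sum (g \<circ> (\<lambda>i. 2*k - i)) A" unfolding Bimg
      by (rule sum.reindex) (auto simp: inj_on_def)
    also have "\<dots> = sum g A" by (simp add: grefl comp_def)
    finally show ?thesis .
  qed
  have DS3a: "dedekind_sum h (2*k) = 2 * sum g A"
  proof -
    have U: "{1..2*k-1} = A \<union> ({k} \<union> B)" using kp by (auto simp: A_def B_def)
    have "dedekind_sum h (2*k) = sum g {1..2*k-1}" by (simp add: dedekind_sum_def g_def)
    also have "\<dots> = sum g A + (g k + sum g B)" unfolding U
      by (subst sum.union_disjoint) (auto simp: A_def B_def)
    finally show ?thesis using gk SB by simp
  qed
  have DS3: "dedekind_sum h (2*k) = 2 * (\<Sum>j\<in>A. (u j / 2 + real_of_int (p j) / 2 - 1/2) * (x j / 2 - 1/2))"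
    unfolding DS3a
  proof (intro arg_cong[where f="\<lambda>t. 2 * t"] sum.cong[OF refl])
    fix j assume j: "j \<in> A"
    have qp: "q j = 2 * (q j div 2) + p j" by (simp add: p_def)
    have eq: "h*j = (2*k) * (q j div 2) + (r j + k * p j)"
      using hj[of j] qp by algebra
    have b: "0 \<le> r j + k * p j" "r j + k * p j < 2*k" "r j + k * p j \<noteq> 0"
      using rb[OF j] p01[of j] by auto
    have "(h*j) mod (2*k) = r j + k * p j" using divmod_eq(2)[OF eq b(1,2)] .
    then have "sawtooth (real_of_int (h*j) / real_of_int (2*k)) = real_of_int (r j + k * p j) / real_of_int (2*k) - 1/2"
      using saw_frac[of "2*k" "h*j"] b(3) kp by simp
    also have "\<dots> = u j / 2 + real_of_int (p j) / 2 - 1/2" using Kpos by (simp add: u_def field_simps)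
    finally have s1: "sawtooth (real_of_int (h*j) / real_of_int (2*k)) = u j / 2 + real_of_int (p j) / 2 - 1/2" .
    have "sawtooth (real_of_int j / real_of_int (2*k)) = real_of_int (j mod (2*k)) / real_of_int (2*k) - 1/2"
      using saw_frac[of "2*k" j] j kp by (simp add: A_def)
    also have "\<dots> = x j / 2 - 1/2" using j Kpos by (simp add: A_def x_def field_simps)
    finally show "g j = (u j / 2 + real_of_int (p j) / 2 - 1/2) * (x j / 2 - 1/2)" using s1 by (simp add: g_def)
  qed

  define Rt where "Rt = (\<lambda>j. (real_of_int (q j) + u j) * (1 - 4 * real_of_int (e j) + 2 * real_of_int (p j))
      + real_of_int h * (- u j + 2 * real_of_int (e j) - 2 * real_of_int (p j) + 1/2))"
  define Lt where "Lt = (\<lambda>j. real_of_int (q j) * (1 - 2 * real_of_int (\<rho> j)))"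
  have RHS: "- 10 * real_of_int h * dedekind_sum h k + 4 * real_of_int h * dedekind_sum (2*h) k
           + 4 * real_of_int h * dedekind_sum h (2*k) = sum Rt A"
  proof -
    define aa where "aa = (\<lambda>j. (u j - 1/2) * (x j - 1/2))"
    define bb where "bb = (\<lambda>j. (2 * u j - real_of_int (e j) - 1/2) * (x j - 1/2))"
    define cc where "cc = (\<lambda>j. (u j / 2 + real_of_int (p j) / 2 - 1/2) * (x j / 2 - 1/2))"
    have "- 10 * real_of_int h * dedekind_sum h k + 4 * real_of_int h * dedekind_sum (2*h) k
           + 4 * real_of_int h * dedekind_sum h (2*k) =
         (-10 * real_of_int h) * sum aa A + (4 * real_of_int h) * sum bb A + (8 * real_of_int h) * sum cc A"
      unfolding DS1 DS2 DS3 aa_def[symmetric] bb_def[symmetric] cc_def[symmetric] by simp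
    also have "\<dots> = (\<Sum>j\<in>A. (-10 * real_of_int h) * aa j + (4 * real_of_int h) * bb j + (8 * real_of_int h) * cc j)"
      by (simp only: sum.distrib sum_distrib_left)
    also have "\<dots> = (\<Sum>j\<in>A. -10 * real_of_int h * ((u j - 1/2) * (x j - 1/2))
            + 4 * real_of_int h * ((2 * u j - real_of_int (e j) - 1/2) * (x j - 1/2))
            + 8 * real_of_int h * ((u j / 2 + real_of_int (p j) / 2 - 1/2) * (x j / 2 - 1/2)))"
      by (simp only: aa_def bb_def cc_def)
    also have "\<dots> = sum Rt A"
    proof (rule sum.cong[OF refl])
      fix j assume j: "j \<in> A"
      have "real_of_int (h*j) = real_of_int (k * q j + r j)" using hj[of j] by simp
      then have "real_of_int (q j) = real_of_int h * x j - u j" using Kpos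
        by (simp add: x_def u_def field_simps)
      then show "-10 * real_of_int h * ((u j - 1/2) * (x j - 1/2))
            + 4 * real_of_int h * ((2 * u j - real_of_int (e j) - 1/2) * (x j - 1/2))
            + 8 * real_of_int h * ((u j / 2 + real_of_int (p j) / 2 - 1/2) * (x j / 2 - 1/2)) = Rt j"
        unfolding Rt_def by (rule pointwise_rhs2)
    qed
    finally show ?thesis .
  qed
  have diff: "sum Rt A - sum Lt A = sum V A + real (card A)"
  proof -
    have "sum Rt A - sum Lt A = (\<Sum>j\<in>A. Rt j - Lt j)" by (simp add: sum_subtractf)
    also have "\<dots> = (\<Sum>j\<in>A. G4 j + G5 j - G7 j - real_of_int h * G8 j - G3 j / 2
        - real_of_int h * G6 j / 2 - (real_of_int h + 1) * G2 j + (real_of_int h + 1) / 2 * G1 j + V j + 1)"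
    proof (rule sum.cong[OF refl])
      fix j assume j: "j \<in> A"
      have e: "real_of_int (e j) = 0 \<or> real_of_int (e j) = 1" using e01[of j] by auto
      show "Rt j - Lt j = G4 j + G5 j - G7 j - real_of_int h * G8 j - G3 j / 2
        - real_of_int h * G6 j / 2 - (real_of_int h + 1) * G2 j + (real_of_int h + 1) / 2 * G1 j + V j + 1"
        unfolding Rt_def Lt_def G1_def G2_def G3_def G4_def G5_def G6_def G7_def G8_def V_def
        by (rule pointwise_final[OF e])
    qed
    also have "\<dots> = sum G4 A + sum G5 A - sum G7 A - real_of_int h * sum G8 A - sum G3 A / 2
        - real_of_int h * sum G6 A / 2 - (real_of_int h + 1) * sum G2 A + (real_of_int h + 1) / 2 * sum G1 A
        + sum V A + real (card A)"
      by (simp add: sum.distrib sum_subtractf sum_distrib_left sum_divide_distrib)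
    finally show ?thesis using S1 S2 S3 S4 S5 S6 S7 S8 by simp
  qed
  have "sum Rt A + 1 / (2 * real_of_int k) - 1/2 = sum Lt A"
  proof -
    have "sum Rt A - sum Lt A + 1 / (2 * real_of_int k) - 1/2 = 0"
      unfolding diff SV cardA using final_arith[OF Kk Kpos] by linarith
    then show ?thesis by linarith
  qed
  then show ?thesis unfolding LHS using RHS by (simp add: Lt_def)
qed

theorem theorem20:
  fixes h k :: int
  assumes "odd h" and "odd k" and "k > 0" and "coprime h k"
  shows "real_of_int (B1 h k) =
           - 10 * of_int h * dedekind_sum h k + 4 * of_int h * dedekind_sum (2*h) k
           + 4 * of_int h * dedekind_sum h (2*k) + 1 / (2 * of_int k) - 1/2"
  using main_identity[OF assms] .

end
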